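(* Let $S=S'aS''$ where $S',S''$ are words and the letter $a$ occurs in $S$ exactly once. Then a word $C$ is an s-cover of $S$ if and only if $C=C'aC''$ where $C'$ is an s-cover of $S'$ and $C''$ is an s-cover of $S''$.
   Context: For words $C,S$, $C$ is an \emph{s-cover} of $S$ if for every position $i$ of $S$ there exist indices $j_0<\dots<j_{|C|-1}$ with $S[j_t]=C[t]$ for all $t$ and $i\in\{j_0,\dots,j_{|C|-1}\}$; by this definition the empty word is an s-cover of the empty word, and the empty word is not an s-cover of any nonempty word unless... (only words whose positions all lie in occurrences count; a nonempty word's s-covers are nonempty). *)

theory Defs
  imports Main
begin

definition occurrence :: "'a list \<Rightarrow> 'a list \<Rightarrow> (nat \<Rightarrow> nat) \<Rightarrow> bool" where
  "occurrence C S j \<longleftrightarrow>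
     (\<forall>t<length C. j t < length S \<and> S ! (j t) = C ! t) \<and>
     (\<forall>t. Suc t < length C \<longrightarrow> j t < j (Suc t))"

text \<open>C is an s-cover of S: C occurs in S, and every position of S lies in some occurrence of C.
  (So the empty word is the only s-cover of the empty word, and a nonempty word's s-covers are nonempty.)\<close>
definition scover :: "'a list \<Rightarrow> 'a list \<Rightarrow> bool" where
  "scover C S \<longleftrightarrow>
     (\<exists>j. occurrence C S j) \<and>
     (\<forall>i<length S. \<exists>j. occurrence C S j \<and> (\<exists>t<length C. j t = i))"

end

theory Submission
  imports Defs
begin

lemma occ_mono:
  assumes "occurrence C S j" "t < u" "u < length C"
  shows "j t < j u"
  using assms(2,3)
proof (induction u)
  case 0 then show ?case by simp
next
  case (Suc u)
  have s: "j u < j (Suc u)" using assms(1) Suc.prems unfolding occurrence_def by blast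
  show ?case
  proof (cases "t = u")
    case True then show ?thesis using s by simp
  next
    case False then have "j t < j u" using Suc by simp
    then show ?thesis using s by simp
  qed
qed

lemma pos_a:
  assumes "k < length (S' @ a # S'')" "(S' @ a # S'') ! k = a" "a \<notin> set S'" "a \<notin> set S''"
  shows "k = length S'"
proof (rule ccontr)
  assume ne: "k \<noteq> length S'"
  show False
  proof (cases "k < length S'")
    case True
    then have "S' ! k = a" using assms(2) by (simp add: nth_append)
    then show False using True assms(3) by (metis nth_mem)
  next
    case False
    then have k: "k > length S'" using ne by simp
    then have "S'' ! (k - length S' - 1) = a" using assms(2)
      by (simp add: nth_append nth_Cons')
    moreover have "k - length S' - 1 < length S''" using assms(1) k by simp
    ultimately show False using assms(4) by (metis nth_mem)
  qed
qed

lemma restrict: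
  assumes occ: "occurrence (C' @ a # C'') (S' @ a # S'') j"
    and "a \<notin> set S'" "a \<notin> set S''"
  shows "j (length C') = length S'"
    "occurrence C' S' j"
    "occurrence C'' S'' (\<lambda>t. j (t + length C' + 1) - length S' - 1)"
proof -
  have o1: "\<And>t. t < length (C' @ a # C'') \<Longrightarrow> j t < length (S' @ a # S'') \<and> (S' @ a # S'') ! (j t) = (C' @ a # C'') ! t"
    using occ unfolding occurrence_def by blast
  have o2: "\<And>t. Suc t < length (C' @ a # C'') \<Longrightarrow> j t < j (Suc t)"
    using occ unfolding occurrence_def by blast
  from o1[of "length C'"] have "j (length C') < length (S' @ a # S'')"
     "(S' @ a # S'') ! (j (length C')) = a" by (auto simp: nth_append)
  then show ja: "j (length C') = length S'" by (rule pos_a[OF _ _ assms(2,3)])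
  show "occurrence C' S' j"
    unfolding occurrence_def
  proof (intro conjI allI impI)
    fix t assume t: "t < length C'"
    have lt: "j t < length S'" using occ_mono[OF occ, of t "length C'"] t ja by simp
    then show "j t < length S'" .
    have "(S' @ a # S'') ! (j t) = (C' @ a # C'') ! t" using o1[of t] t by simp
    then show "S' ! j t = C' ! t" using lt t by (simp add: nth_append)
  next
    fix t assume "Suc t < length C'"
    then show "j t < j (Suc t)" using o2[of t] by simp
  qed
  show "occurrence C'' S'' (\<lambda>t. j (t + length C' + 1) - length S' - 1)"
    unfolding occurrence_def
  proof (intro conjI allI impI)
    fix t assume t: "t < length C''"
    have gt: "j (t + length C' + 1) > length S'"
      using occ_mono[OF occ, of "length C'" "t + length C' + 1"] t ja by simp
    have l: "j (t + length C' + 1) < length (S' @ a # S'')"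
      and e: "(S' @ a # S'') ! j (t + length C' + 1) = (C' @ a # C'') ! (t + length C' + 1)"
      using o1[of "t + length C' + 1"] t by auto
    show "j (t + length C' + 1) - length S' - 1 < length S''" using l gt by simp
    have "(C' @ a # C'') ! (t + length C' + 1) = C'' ! t" by (simp add: nth_append)
    moreover have "(S' @ a # S'') ! j (t + length C' + 1) = S'' ! (j (t + length C' + 1) - length S' - 1)"
      using gt by (simp add: nth_append nth_Cons')
    ultimately show "S'' ! (j (t + length C' + 1) - length S' - 1) = C'' ! t" using e by simp
  next
    fix t assume t: "Suc t < length C''"
    have gt: "j (t + length C' + 1) > length S'"
      using occ_mono[OF occ, of "length C'" "t + length C' + 1"] t ja by simp
    have "j (t + length C' + 1) < j (Suc t + length C' + 1)" using o2[of "t + length C' + 1"] t by simp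
    then show "j (t + length C' + 1) - length S' - 1 < j (Suc t + length C' + 1) - length S' - 1"
      using gt by simp
  qed
qed

definition comb :: "nat \<Rightarrow> nat \<Rightarrow> (nat \<Rightarrow> nat) \<Rightarrow> (nat \<Rightarrow> nat) \<Rightarrow> nat \<Rightarrow> nat" where
  "comb n m j' j'' t = (if t < n then j' t else if t = n then m else m + 1 + j'' (t - n - 1))"

lemma combine:
  assumes o': "occurrence C' S' j'" and o'': "occurrence C'' S'' j''"
  shows "occurrence (C' @ a # C'') (S' @ a # S'') (comb (length C') (length S') j' j'')"
proof -
  have a1: "\<And>t. t < length C' \<Longrightarrow> j' t < length S' \<and> S' ! (j' t) = C' ! t"
    using o' unfolding occurrence_def by blast
  have a2: "\<And>t. Suc t < length C' \<Longrightarrow> j' t < j' (Suc t)"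
    using o' unfolding occurrence_def by blast
  have b1: "\<And>t. t < length C'' \<Longrightarrow> j'' t < length S'' \<and> S'' ! (j'' t) = C'' ! t"
    using o'' unfolding occurrence_def by blast
  have b2: "\<And>t. Suc t < length C'' \<Longrightarrow> j'' t < j'' (Suc t)"
    using o'' unfolding occurrence_def by blast
  show ?thesis
  unfolding occurrence_def
  proof (rule conjI; intro allI impI)
    fix t assume t: "t < length (C' @ a # C'')"
    show "comb (length C') (length S') j' j'' t < length (S' @ a # S'') \<and>
          (S' @ a # S'') ! comb (length C') (length S') j' j'' t = (C' @ a # C'') ! t"
    proof (cases "t < length C'")
      case True
      then show ?thesis using a1[OF True] unfolding comb_def
        by (simp add: nth_append)
    next
      case False
      show ?thesis
      proof (cases "t = length C'")
        case True then show ?thesis unfolding comb_def by (simp add: nth_append)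
      next
        case F2: False
        define s where "s = t - length C' - 1"
        have s: "t = length C' + 1 + s" using False F2 unfolding s_def by arith
        then have sl: "s < length C''" using t by simp
        note b = b1[OF sl]
        have c: "comb (length C') (length S') j' j'' t = length S' + 1 + j'' s"
          unfolding comb_def using s by simp
        have "(C' @ a # C'') ! t = C'' ! s" using s by (simp add: nth_append)
        moreover have "(S' @ a # S'') ! (length S' + 1 + j'' s) = S'' ! j'' s" by (simp add: nth_append)
        ultimately show ?thesis using c b by simp
      qed
    qed
  next
    fix t assume t: "Suc t < length (C' @ a # C'')"
    show "comb (length C') (length S') j' j'' t < comb (length C') (length S') j' j'' (Suc t)"
    proof (cases "Suc t < length C'")
      case True then show ?thesis using a2[OF True] unfolding comb_def by simp
    next
      case False
      show ?thesis
      proof (cases "Suc t = length C'")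
        case True
        have "j' t < length S'" using a1[of t] True by simp
        then show ?thesis using True unfolding comb_def by simp
      next
        case F2: False
        show ?thesis
        proof (cases "t = length C'")
          case True then show ?thesis unfolding comb_def by simp
        next
          case F3: False
          define s where "s = t - length C' - 1"
          have s: "t = length C' + 1 + s" using False F2 F3 unfolding s_def by arith
          then have "Suc s < length C''" using t by simp
          then have "j'' s < j'' (Suc s)" by (rule b2)
          moreover have "Suc t - length C' - 1 = Suc s" using s by simp
          ultimately show ?thesis using s unfolding comb_def by simp
        qed
      qed
    qed
  qed
qed

theorem mainTheorem18:
  fixes S' S'' C :: "'a list" and a :: 'a
  assumes "a \<notin> set S'" and "a \<notin> set S''"
  shows "scover C (S' @ [a] @ S'') \<longleftrightarrow>
         (\<exists>C' C''. C = C' @ [a] @ C'' \<and> scover C' S' \<and> scover C'' S'')"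
proof
  assume sc0: "scover C (S' @ [a] @ S'')"
  have sc: "scover C (S' @ a # S'')" using sc0 by simp
  have cov: "\<And>i. i < length (S' @ a # S'') \<Longrightarrow> \<exists>j. occurrence C (S' @ a # S'') j \<and> (\<exists>t<length C. j t = i)"
    using sc unfolding scover_def by blast
  have "length S' < length (S' @ a # S'')" by simp
  from cov[OF this] obtain j0 t where oj0: "occurrence C (S' @ a # S'') j0" and t: "t < length C" "j0 t = length S'"
    by blast
  have "(S' @ a # S'') ! (j0 t) = C ! t" using oj0 t unfolding occurrence_def by blast
  then have Ct: "C ! t = a" using t by simp
  define C' where "C' = take t C"
  define C'' where "C'' = drop (Suc t) C"
  have Ceq: "C = C' @ a # C''" unfolding C'_def C''_def using t Ct
    by (metis id_take_nth_drop)
  have lC': "length C' = t" using t unfolding C'_def by simp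
  have occs: "\<And>j. occurrence C (S' @ a # S'') j \<Longrightarrow> occurrence C' S' j \<and> j t = length S' \<and>
      occurrence C'' S'' (\<lambda>u. j (u + length C' + 1) - length S' - 1)"
    using restrict[of C' a C'' S' S''] assms Ceq lC' by auto
  have s1: "scover C' S'"
    unfolding scover_def
  proof (intro conjI allI impI)
    show "\<exists>j. occurrence C' S' j" using occs[OF oj0] by blast
  next
    fix i assume i: "i < length S'"
    then have "i < length (S' @ a # S'')" by simp
    from cov[OF this] obtain j u where oj: "occurrence C (S' @ a # S'') j" and u: "u < length C" "j u = i"
      by blast
    have "u < t"
    proof (rule ccontr)
      assume "\<not> u < t"
      then have "j t \<le> j u" using occ_mono[OF oj, of t u] u by (cases "t = u") auto
      then show False using occs[OF oj] u i by simp
    qed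
    then show "\<exists>j. occurrence C' S' j \<and> (\<exists>t<length C'. j t = i)"
      using occs[OF oj] u lC' by blast
  qed
  have s2: "scover C'' S''"
    unfolding scover_def
  proof (intro conjI allI impI)
    show "\<exists>j. occurrence C'' S'' j" using occs[OF oj0] by blast
  next
    fix i assume i: "i < length S''"
    have ii: "length S' + 1 + i < length (S' @ a # S'')" using i by simp
    from cov[OF ii] obtain j u where oj: "occurrence C (S' @ a # S'') j" and u: "u < length C" "j u = length S' + 1 + i"
      by blast
    have "t < u"
    proof (rule ccontr)
      assume "\<not> t < u"
      then have "j u \<le> j t" using occ_mono[OF oj, of u t] t by (cases "t = u") auto
      then show False using occs[OF oj] u by simp
    qed
    then obtain v where v: "u = v + length C' + 1" using lC'
      by (metis add.commute less_imp_Suc_add plus_1_eq_Suc add_Suc_right)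
    have "v < length C''" using u v Ceq by simp
    moreover have "j (v + length C' + 1) - length S' - 1 = i" using u v by simp
    ultimately show "\<exists>j. occurrence C'' S'' j \<and> (\<exists>t<length C''. j t = i)"
      using occs[OF oj] by blast
  qed
  show "\<exists>C' C''. C = C' @ [a] @ C'' \<and> scover C' S' \<and> scover C'' S''"
    using Ceq s1 s2 by auto
next
  assume "\<exists>C' C''. C = C' @ [a] @ C'' \<and> scover C' S' \<and> scover C'' S''"
  then obtain C' C'' where Ceq: "C = C' @ a # C''" and s1: "scover C' S'" and s2: "scover C'' S''"
    by auto
  obtain j1 where j1: "occurrence C' S' j1" using s1 unfolding scover_def by blast
  obtain j2 where j2: "occurrence C'' S'' j2" using s2 unfolding scover_def by blast
  show "scover C (S' @ [a] @ S'')"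
    unfolding scover_def Ceq
  proof (intro conjI allI impI)
    show "\<exists>j. occurrence (C' @ a # C'') (S' @ [a] @ S'') j" using combine[OF j1 j2] by auto
  next
    fix i assume i: "i < length (S' @ [a] @ S'')"
    consider "i < length S'" | "i = length S'" | "i > length S'" by linarith
    then show "\<exists>j. occurrence (C' @ a # C'') (S' @ [a] @ S'') j \<and> (\<exists>t<length (C' @ a # C''). j t = i)"
    proof cases
      case 1
      then obtain j u where ju: "occurrence C' S' j" "u < length C'" "j u = i"
        using s1 unfolding scover_def by blast
      have o: "occurrence (C' @ a # C'') (S' @ [a] @ S'') (comb (length C') (length S') j j2)"
        using combine[OF ju(1) j2, of a] by simp
      have "comb (length C') (length S') j j2 u = i" using ju unfolding comb_def by simp
      moreover have "u < length (C' @ a # C'')" using ju by simp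
      ultimately show ?thesis using o by blast
    next
      case 2
      then show ?thesis using combine[OF j1 j2, of a]
        by (intro exI[of _ "comb (length C') (length S') j1 j2"]) (auto simp: comb_def intro!: exI[of _ "length C'"])
    next
      case 3
      have kk: "i - length S' - 1 < length S''" using 3 i by simp
      obtain j u where oj: "occurrence C'' S'' j" "u < length C''" "j u = i - length S' - 1"
        using s2 kk unfolding scover_def by blast
      have "comb (length C') (length S') j1 j (length C' + 1 + u) = i"
        using oj 3 unfolding comb_def by simp
      then show ?thesis using combine[OF j1 oj(1), of a] oj(2)
        by (intro exI[of _ "comb (length C') (length S') j1 j"]) (auto intro!: exI[of _ "length C' + 1 + u"])
    qed
  qed
qed

end
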